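(* Let $(G,E)$ be a connected simple graph with countable vertex set, $\mu$ a conductance, and $d$ a metric on $G$. Assume (E($\beta$)): there is $r_0>0$ with $\mathbb{E}^x[\tau(x,r)]\asymp r^\beta$ for all $x\in G$ and $r>r_0$; and (VG($\alpha$)): $V_d(x,r)\le C(r/s)^\alpha V_d(x,s)$ for all $x$ and $r>s>0$. Then there exists $c>0$ such that $h_{2n}(x,x)\ge c/V_d(x,n^{1/\beta})$ for all $x\in G$ and $n\ge1$.
   Context: $\mu_x=\sum_{y\sim x}\mu_{xy}$, $V_d(x,r)=\sum_{y\in B_d(x,r)}\mu_y$. $(X_n)$ is the random walk with transition probabilities $p(x,y)=\mu_{xy}/\mu_x$, $\mathbb{P}^x,\mathbb{E}^x$ its law and expectation started at $x$, $p_n(x,y)=\mathbb{P}^x(X_n=y)$, $h_n(x,y)=p_n(x,y)/\mu_y$. $\tau(x,r)=\min\{n:X_n\notin B_d(x,r)\}$. *)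

theory Defs
  imports "HOL-Analysis.Analysis"
begin

definition simple_graph :: "('a \<Rightarrow> 'a \<Rightarrow> bool) \<Rightarrow> bool" where
  "simple_graph E \<longleftrightarrow> (\<forall>x y. E x y \<longrightarrow> E y x) \<and> (\<forall>x. \<not> E x x)"

definition connected_graph :: "('a \<Rightarrow> 'a \<Rightarrow> bool) \<Rightarrow> bool" where
  "connected_graph E \<longleftrightarrow> (\<forall>x y. E\<^sup>*\<^sup>* x y)"

definition conductance :: "('a \<Rightarrow> 'a \<Rightarrow> bool) \<Rightarrow> ('a \<Rightarrow> 'a \<Rightarrow> real) \<Rightarrow> bool" where
  "conductance E mu \<longleftrightarrow>
     (\<forall>x y. mu x y = mu y x) \<and> (\<forall>x y. E x y \<longrightarrow> mu x y > 0) \<and>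
     (\<forall>x y. \<not> E x y \<longrightarrow> mu x y = 0) \<and> (\<forall>x. (\<lambda>y. mu x y) summable_on {y. E x y})"

definition is_metric :: "('a \<Rightarrow> 'a \<Rightarrow> real) \<Rightarrow> bool" where
  "is_metric d \<longleftrightarrow> (\<forall>x y. d x y \<ge> 0) \<and> (\<forall>x y. d x y = 0 \<longleftrightarrow> x = y) \<and>
     (\<forall>x y. d x y = d y x) \<and> (\<forall>x y z. d x z \<le> d x y + d y z)"

definition vweight :: "('a \<Rightarrow> 'a \<Rightarrow> bool) \<Rightarrow> ('a \<Rightarrow> 'a \<Rightarrow> real) \<Rightarrow> 'a \<Rightarrow> real" where
  "vweight E mu x = (\<Sum>\<^sub>\<infinity>y\<in>{y. E x y}. mu x y)"

definition ptrans :: "('a \<Rightarrow> 'a \<Rightarrow> bool) \<Rightarrow> ('a \<Rightarrow> 'a \<Rightarrow> real) \<Rightarrow> 'a \<Rightarrow> 'a \<Rightarrow> real" where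
  "ptrans E mu x y = (if E x y then mu x y / vweight E mu x else 0)"

primrec pn :: "('a \<Rightarrow> 'a \<Rightarrow> bool) \<Rightarrow> ('a \<Rightarrow> 'a \<Rightarrow> real) \<Rightarrow> nat \<Rightarrow> 'a \<Rightarrow> 'a \<Rightarrow> real" where
  "pn E mu 0 x y = (if x = y then 1 else 0)"
| "pn E mu (Suc n) x y = (\<Sum>\<^sub>\<infinity>z. ptrans E mu x z * pn E mu n z y)"

definition hn :: "('a \<Rightarrow> 'a \<Rightarrow> bool) \<Rightarrow> ('a \<Rightarrow> 'a \<Rightarrow> real) \<Rightarrow> nat \<Rightarrow> 'a \<Rightarrow> 'a \<Rightarrow> real" where
  "hn E mu n x y = pn E mu n x y / vweight E mu y"

definition dball :: "('a \<Rightarrow> 'a \<Rightarrow> real) \<Rightarrow> 'a \<Rightarrow> real \<Rightarrow> 'a set" where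
  "dball d x r = {y. d x y < r}"

definition vol :: "('a \<Rightarrow> 'a \<Rightarrow> bool) \<Rightarrow> ('a \<Rightarrow> 'a \<Rightarrow> real) \<Rightarrow> ('a \<Rightarrow> 'a \<Rightarrow> real) \<Rightarrow> 'a \<Rightarrow> real \<Rightarrow> real" where
  "vol E mu d x r = (\<Sum>\<^sub>\<infinity>y\<in>dball d x r. vweight E mu y)"

text \<open>Killed kernel: qk B n x y = P^x(X_0,...,X_n \<in> B, X_n = y).\<close>
primrec qk :: "('a \<Rightarrow> 'a \<Rightarrow> bool) \<Rightarrow> ('a \<Rightarrow> 'a \<Rightarrow> real) \<Rightarrow> 'a set \<Rightarrow> nat \<Rightarrow> 'a \<Rightarrow> 'a \<Rightarrow> real" where
  "qk E mu B 0 x y = (if x = y \<and> x \<in> B then 1 else 0)"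
| "qk E mu B (Suc n) x y = (if y \<in> B then (\<Sum>\<^sub>\<infinity>z. qk E mu B n x z * ptrans E mu z y) else 0)"

text \<open>E^x[tau(x,r)] = sum_{n>=0} P^x(tau(x,r) > n), with tau(x,r) = min{n. X_n \<notin> B_d(x,r)};
  value in ennreal (may be infinite).\<close>
definition exit_time :: "('a \<Rightarrow> 'a \<Rightarrow> bool) \<Rightarrow> ('a \<Rightarrow> 'a \<Rightarrow> real) \<Rightarrow> ('a \<Rightarrow> 'a \<Rightarrow> real) \<Rightarrow> 'a \<Rightarrow> real \<Rightarrow> ennreal" where
  "exit_time E mu d x r = (\<Sum>n. ennreal (\<Sum>\<^sub>\<infinity>y. qk E mu (dball d x r) n x y))"

end

theory Submission
  imports Defs
begin

lemma enn_summable[simp]: "(f::'b \<Rightarrow> ennreal) summable_on A"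
  by (rule nonneg_summable_on_complete) simp

lemma ennsum_cmult: "(\<Sum>\<^sub>\<infinity>x\<in>A. c * f x) = c * (\<Sum>\<^sub>\<infinity>x\<in>A. (f x::ennreal))"
proof -
  have "(\<Sum>\<^sub>\<infinity>x\<in>A. c * f x) = (SUP F\<in>{F. finite F \<and> F\<subseteq>A}. sum (\<lambda>x. c * f x) F)"
    by (rule nonneg_infsum_complete) simp
  also have "\<dots> = (SUP F\<in>{F. finite F \<and> F\<subseteq>A}. c * sum f F)"
    by (simp add: sum_distrib_left)
  also have "\<dots> = c * (SUP F\<in>{F. finite F \<and> F\<subseteq>A}. sum f F)"
    by (rule SUP_mult_left_ennreal[symmetric])
  also have "\<dots> = c * (\<Sum>\<^sub>\<infinity>x\<in>A. f x)"
    by (subst nonneg_infsum_complete) simp_all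
  finally show ?thesis .
qed

lemma ennsum_cmult_right: "(\<Sum>\<^sub>\<infinity>x\<in>A. f x * c) = (\<Sum>\<^sub>\<infinity>x\<in>A. (f x::ennreal)) * c"
  using ennsum_cmult[of c f A] by (simp add: mult.commute)

lemma ennsum_mono: "(\<And>x. x \<in> A \<Longrightarrow> f x \<le> g x) \<Longrightarrow> (\<Sum>\<^sub>\<infinity>x\<in>A. (f x::ennreal)) \<le> (\<Sum>\<^sub>\<infinity>x\<in>A. g x)"
  by (rule infsum_mono) (auto simp del: summable_on_ennreal)

lemma ennsum_subset: "A \<subseteq> B \<Longrightarrow> (\<Sum>\<^sub>\<infinity>x\<in>A. (f x::ennreal)) \<le> (\<Sum>\<^sub>\<infinity>x\<in>B. f x)"
  by (rule infsum_mono_neutral) auto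

lemma ennsum_single: "(\<Sum>\<^sub>\<infinity>x\<in>A. (f x::ennreal)) \<ge> (if a \<in> A then f a else 0)"
  using ennsum_subset[of "{a}" A f] by auto

lemma ennsum_Sigma_finite:
  assumes "finite F"
  shows "(\<Sum>\<^sub>\<infinity>p\<in>Sigma F B. (f p::ennreal)) = (\<Sum>x\<in>F. \<Sum>\<^sub>\<infinity>y\<in>B x. f (x,y))"
  using assms
proof (induction F rule: finite_induct)
  case empty then show ?case by simp
next
  case (insert x F)
  have e: "Sigma (insert x F) B = Pair x ` B x \<union> Sigma F B" by auto
  have d: "Pair x ` B x \<inter> Sigma F B = {}" using insert by auto
  have "(\<Sum>\<^sub>\<infinity>p\<in>Pair x ` B x. f p) = (\<Sum>\<^sub>\<infinity>y\<in>B x. f (x,y))"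
    by (subst infsum_reindex) (auto simp: inj_on_def o_def)
  then show ?case
    using insert by (simp add: e infsum_Un_disjoint[OF enn_summable enn_summable d])
qed

lemma ennsum_Sigma:
  "(\<Sum>\<^sub>\<infinity>p\<in>Sigma A B. (f p::ennreal)) = (\<Sum>\<^sub>\<infinity>x\<in>A. \<Sum>\<^sub>\<infinity>y\<in>B x. f (x,y))"
proof (rule antisym)
  show "(\<Sum>\<^sub>\<infinity>p\<in>Sigma A B. f p) \<le> (\<Sum>\<^sub>\<infinity>x\<in>A. \<Sum>\<^sub>\<infinity>y\<in>B x. f (x,y))"
  proof (rule infsum_le_finite_sums[OF enn_summable])
    fix G assume G: "finite G" "G \<subseteq> Sigma A B"
    define F where "F = fst ` G"
    have F: "finite F" "F \<subseteq> A" using G by (auto simp: F_def)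
    have "sum f G = (\<Sum>\<^sub>\<infinity>p\<in>G. f p)" using G by simp
    also have "\<dots> \<le> (\<Sum>\<^sub>\<infinity>p\<in>Sigma F B. f p)"
      using G by (intro ennsum_subset) (force simp: F_def)
    also have "\<dots> = (\<Sum>x\<in>F. \<Sum>\<^sub>\<infinity>y\<in>B x. f (x,y))" by (rule ennsum_Sigma_finite[OF F(1)])
    also have "\<dots> = (\<Sum>\<^sub>\<infinity>x\<in>F. \<Sum>\<^sub>\<infinity>y\<in>B x. f (x,y))" using F by simp
    also have "\<dots> \<le> (\<Sum>\<^sub>\<infinity>x\<in>A. \<Sum>\<^sub>\<infinity>y\<in>B x. f (x,y))" using F by (intro ennsum_subset)
    finally show "sum f G \<le> (\<Sum>\<^sub>\<infinity>x\<in>A. \<Sum>\<^sub>\<infinity>y\<in>B x. f (x,y))" .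
  qed
next
  show "(\<Sum>\<^sub>\<infinity>x\<in>A. \<Sum>\<^sub>\<infinity>y\<in>B x. f (x,y)) \<le> (\<Sum>\<^sub>\<infinity>p\<in>Sigma A B. f p)"
  proof (rule infsum_le_finite_sums[OF enn_summable])
    fix F assume F: "finite F" "F \<subseteq> A"
    have "(\<Sum>x\<in>F. \<Sum>\<^sub>\<infinity>y\<in>B x. f (x,y)) = (\<Sum>\<^sub>\<infinity>p\<in>Sigma F B. f p)"
      by (rule ennsum_Sigma_finite[OF F(1), symmetric])
    also have "\<dots> \<le> (\<Sum>\<^sub>\<infinity>p\<in>Sigma A B. f p)" using F by (intro ennsum_subset) auto
    finally show "(\<Sum>x\<in>F. \<Sum>\<^sub>\<infinity>y\<in>B x. f (x,y)) \<le> (\<Sum>\<^sub>\<infinity>p\<in>Sigma A B. f p)" .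
  qed
qed

lemma ennsum_swap:
  "(\<Sum>\<^sub>\<infinity>x\<in>A. \<Sum>\<^sub>\<infinity>y\<in>B. (f x y::ennreal)) = (\<Sum>\<^sub>\<infinity>y\<in>B. \<Sum>\<^sub>\<infinity>x\<in>A. f x y)"
proof -
  have "(\<Sum>\<^sub>\<infinity>x\<in>A. \<Sum>\<^sub>\<infinity>y\<in>B. f x y) = (\<Sum>\<^sub>\<infinity>p\<in>A\<times>B. f (fst p) (snd p))"
    by (subst ennsum_Sigma) simp
  also have "\<dots> = (\<Sum>\<^sub>\<infinity>p\<in>B\<times>A. f (snd p) (fst p))"
  proof -
    have "((\<lambda>p. f (fst p) (snd p)) has_sum (\<Sum>\<^sub>\<infinity>p\<in>A\<times>B. f (fst p) (snd p))) (A\<times>B)"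
      by (rule has_sum_infsum) simp
    then have "((\<lambda>(x,y). f (fst (y,x)) (snd (y,x))) has_sum (\<Sum>\<^sub>\<infinity>p\<in>A\<times>B. f (fst p) (snd p))) (B\<times>A)"
      by (subst (asm) has_sum_swap) 
    then show ?thesis by (simp add: case_prod_unfold infsumI)
  qed
  also have "\<dots> = (\<Sum>\<^sub>\<infinity>y\<in>B. \<Sum>\<^sub>\<infinity>x\<in>A. f x y)"
    by (subst ennsum_Sigma) simp
  finally show ?thesis .
qed

lemma ennsum_real:
  fixes f :: "'b \<Rightarrow> real"
  assumes "f summable_on A" "\<And>x. x \<in> A \<Longrightarrow> f x \<ge> 0"
  shows "ennreal (infsum f A) = (\<Sum>\<^sub>\<infinity>x\<in>A. ennreal (f x))"
proof -
  have "\<And>F. \<lbrakk>finite F; F \<subseteq> A\<rbrakk> \<Longrightarrow> sum (ennreal \<circ> f) F = ennreal (sum f F)"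
    by (metis (mono_tags, lifting) comp_def assms(2) subsetD sum.cong sum_ennreal)
  then have "infsum (ennreal \<circ> f) A = ennreal (infsum f A)"
    by (simp add: infsum_comm_additive_general assms(1))
  then show ?thesis by (simp add: o_def)
qed

lemma real_summable_of_enn:
  fixes f :: "'b \<Rightarrow> real"
  assumes "\<And>x. x \<in> A \<Longrightarrow> f x \<ge> 0" "(\<Sum>\<^sub>\<infinity>x\<in>A. ennreal (f x)) < top"
  shows "f summable_on A"
proof (rule nonneg_bdd_above_summable_on)
  show "\<And>x. x \<in> A \<Longrightarrow> 0 \<le> f x" by (rule assms(1))
  show "bdd_above (sum f ` {F. F \<subseteq> A \<and> finite F})"
  proof (rule bdd_aboveI2)
    fix F assume F: "F \<in> {F. F \<subseteq> A \<and> finite F}"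
    have "ennreal (sum f F) = (\<Sum>x\<in>F. ennreal (f x))"
      using F assms(1) by (intro sum_ennreal[symmetric]) auto
    also have "\<dots> = (\<Sum>\<^sub>\<infinity>x\<in>F. ennreal (f x))" using F by simp
    also have "\<dots> \<le> (\<Sum>\<^sub>\<infinity>x\<in>A. ennreal (f x))" using F by (intro ennsum_subset) auto
    finally have "enn2real (ennreal (sum f F)) \<le> enn2real (\<Sum>\<^sub>\<infinity>x\<in>A. ennreal (f x))"
      using assms(2) by (intro enn2real_mono) auto
    moreover have "sum f F \<ge> 0" using F assms(1) by (intro sum_nonneg) auto
    ultimately show "sum f F \<le> enn2real (\<Sum>\<^sub>\<infinity>x\<in>A. ennreal (f x))" by simp
  qed
qed

lemma suminf_ennsum: "(\<Sum>n. (f n::ennreal)) = (\<Sum>\<^sub>\<infinity>n. f n)"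
proof (rule antisym)
  show "(\<Sum>n. f n) \<le> (\<Sum>\<^sub>\<infinity>n. f n)"
    unfolding suminf_eq_SUP
  proof (rule SUP_least)
    fix n show "(\<Sum>i<n. f i) \<le> (\<Sum>\<^sub>\<infinity>n. f n)"
      using ennsum_subset[of "{..<n}" UNIV f] by simp
  qed
next
  show "(\<Sum>\<^sub>\<infinity>n. f n) \<le> (\<Sum>n. f n)"
  proof (rule infsum_le_finite_sums)
    fix F :: "nat set" assume F: "finite F"
    then obtain m where "F \<subseteq> {..<m}"
      by (meson finite_nat_iff_bounded)
    then have "sum f F \<le> sum f {..<m}" by (intro sum_mono2) auto
    also have "\<dots> \<le> (\<Sum>n. f n)" by (rule sum_le_suminf) auto
    finally show "sum f F \<le> (\<Sum>n. f n)" .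
  qed simp
qed


lemma ennsum_delta: "(\<Sum>\<^sub>\<infinity>z\<in>A. if z = x then (g z::ennreal) else 0) = (if x \<in> A then g x else 0)"
proof -
  have "(\<Sum>\<^sub>\<infinity>z\<in>A. if z = x then (g z::ennreal) else 0) = (\<Sum>\<^sub>\<infinity>z\<in>A \<inter> {x}. g z)"
    by (rule infsum_cong_neutral) auto
  then show ?thesis by (cases "x \<in> A") auto
qed

lemma ennsum_real_fin:
  fixes f :: "'b \<Rightarrow> real"
  assumes "\<And>x. x \<in> A \<Longrightarrow> f x \<ge> 0" "(\<Sum>\<^sub>\<infinity>x\<in>A. ennreal (f x)) < top"
  shows "ennreal (infsum f A) = (\<Sum>\<^sub>\<infinity>x\<in>A. ennreal (f x))"
  using assms by (intro ennsum_real real_summable_of_enn) auto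

locale walk =
  fixes E :: "'a \<Rightarrow> 'a \<Rightarrow> bool" and mu :: "'a \<Rightarrow> 'a \<Rightarrow> real"
  assumes sg: "simple_graph E" and cond: "conductance E mu"
begin

lemma mu_sym: "mu x y = mu y x" using cond by (auto simp: conductance_def)
lemma mu_nonneg: "mu x y \<ge> 0"
  using cond unfolding conductance_def by (metis less_eq_real_def order_refl)
lemma mu_pos: "E x y \<Longrightarrow> mu x y > 0" using cond by (auto simp: conductance_def)
lemma mu_zero: "\<not> E x y \<Longrightarrow> mu x y = 0" using cond by (auto simp: conductance_def)
lemma mu_summ: "(\<lambda>y. mu x y) summable_on {y. E x y}" using cond by (auto simp: conductance_def)
lemma E_sym: "E x y \<Longrightarrow> E y x" using sg by (auto simp: simple_graph_def)

lemma vw_nonneg: "vweight E mu x \<ge> 0"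
  unfolding vweight_def by (rule infsum_nonneg) (rule mu_nonneg)

lemma vw_ge: "E x y \<Longrightarrow> mu x y \<le> vweight E mu x"
proof -
  assume "E x y"
  have "infsum (\<lambda>z. mu x z) {y} \<le> infsum (\<lambda>z. mu x z) {z. E x z}"
    by (rule infsum_mono2) (use \<open>E x y\<close> mu_summ mu_nonneg in auto)
  then show ?thesis by (simp add: vweight_def)
qed

lemma vw_pos: "E x y \<Longrightarrow> vweight E mu x > 0"
  using vw_ge mu_pos by (meson less_le_trans)

lemma pt_nonneg: "ptrans E mu x y \<ge> 0"
  unfolding ptrans_def using mu_nonneg vw_nonneg by auto

lemma W_pt: "ennreal (vweight E mu x) * ennreal (ptrans E mu x y) = ennreal (mu x y)"
proof (cases "E x y")
  case True
  then have "vweight E mu x > 0" by (rule vw_pos)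
  then show ?thesis using True pt_nonneg vw_nonneg
    by (simp add: ennreal_mult'[symmetric] ptrans_def)
next
  case False then show ?thesis by (simp add: ptrans_def mu_zero)
qed

lemma pt_sum: "(\<Sum>\<^sub>\<infinity>z. ennreal (ptrans E mu x z)) \<le> 1"
proof -
  let ?v = "vweight E mu x"
  have s: "(\<lambda>z. mu x z * inverse ?v) summable_on {z. E x z}"
    by (rule summable_on_cmult_left[OF mu_summ])
  have "(\<Sum>\<^sub>\<infinity>z. ennreal (ptrans E mu x z)) = (\<Sum>\<^sub>\<infinity>z\<in>{z. E x z}. ennreal (mu x z * inverse ?v))"
    by (rule infsum_cong_neutral) (auto simp: ptrans_def divide_inverse)
  also have "\<dots> = ennreal (\<Sum>\<^sub>\<infinity>z\<in>{z. E x z}. mu x z * inverse ?v)"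
    by (rule ennsum_real[symmetric, OF s]) (simp add: mu_nonneg vw_nonneg)
  also have "(\<Sum>\<^sub>\<infinity>z\<in>{z. E x z}. mu x z * inverse ?v) = ?v * inverse ?v"
    by (simp add: infsum_cmult_left' vweight_def)
  also have "ennreal (?v * inverse ?v) \<le> 1"
    by (cases "?v = 0") auto
  finally show ?thesis .
qed

abbreviation P where "P n x y \<equiv> ennreal (pn E mu n x y)"
abbreviation p where "p x y \<equiv> ennreal (ptrans E mu x y)"

declare pn.simps(2)[simp del]

lemma pn_step:
  assumes "\<And>z. 0 \<le> pn E mu n z y \<and> pn E mu n z y \<le> 1"
  shows "P (Suc n) x y = (\<Sum>\<^sub>\<infinity>z. p x z * P n z y)" and "(\<Sum>\<^sub>\<infinity>z. p x z * P n z y) \<le> 1"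
proof -
  have le: "(\<Sum>\<^sub>\<infinity>z. p x z * P n z y) \<le> 1"
  proof -
    have "(\<Sum>\<^sub>\<infinity>z. p x z * P n z y) \<le> (\<Sum>\<^sub>\<infinity>z. p x z)"
      by (rule ennsum_mono) (use assms in \<open>auto intro: mult_left_le\<close>)
    also have "\<dots> \<le> 1" by (rule pt_sum)
    finally show ?thesis .
  qed
  have eq: "(\<Sum>\<^sub>\<infinity>z. p x z * P n z y) = (\<Sum>\<^sub>\<infinity>z. ennreal (ptrans E mu x z * pn E mu n z y))"
    using assms pt_nonneg by (simp add: ennreal_mult')
  have lt: "(\<Sum>\<^sub>\<infinity>z. ennreal (ptrans E mu x z * pn E mu n z y)) < top"
    using le eq order.strict_trans1[OF _ ennreal_one_less_top] by metis
  have "P (Suc n) x y = (\<Sum>\<^sub>\<infinity>z. ennreal (ptrans E mu x z * pn E mu n z y))"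
    unfolding pn.simps(2) by (rule ennsum_real_fin) (use assms pt_nonneg lt in auto)
  then show "P (Suc n) x y = (\<Sum>\<^sub>\<infinity>z. p x z * P n z y)" using eq by simp
  show "(\<Sum>\<^sub>\<infinity>z. p x z * P n z y) \<le> 1" by (rule le)
qed

lemma pn_01: "0 \<le> pn E mu n x y \<and> pn E mu n x y \<le> 1"
proof (induction n arbitrary: x y)
  case 0
  then show ?case by simp
next
  case (Suc n)
  have a: "P (Suc n) x y \<le> 1" using pn_step[of n y x, OF Suc] by simp
  have b: "pn E mu (Suc n) x y \<ge> 0"
    unfolding pn.simps(2) by (rule infsum_nonneg) (use Suc pt_nonneg in auto)
  show ?case using a b by (simp add: ennreal_le_1)
qed

lemma P_Suc: "P (Suc n) x y = (\<Sum>\<^sub>\<infinity>z. p x z * P n z y)"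
  using pn_step(1)[OF pn_01] .

lemma P_le1: "P n x y \<le> 1" using pn_01 by (simp add: ennreal_le_1)

lemma P_0: "P 0 x y = (if x = y then 1 else 0)" by simp

lemma CK: "P (n + m) x y = (\<Sum>\<^sub>\<infinity>z. P n x z * P m z y)"
proof (induction n arbitrary: x)
  case 0
  have "(\<Sum>\<^sub>\<infinity>z. P 0 x z * P m z y) = (\<Sum>\<^sub>\<infinity>z. if z = x then P m z y else 0)"
    by (rule infsum_cong) auto
  then show ?case by (simp add: ennsum_delta)
next
  case (Suc n)
  have "P (Suc n + m) x y = (\<Sum>\<^sub>\<infinity>w. p x w * P (n + m) w y)" by (simp add: P_Suc)
  also have "\<dots> = (\<Sum>\<^sub>\<infinity>w. \<Sum>\<^sub>\<infinity>z. p x w * (P n w z * P m z y))"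
    by (simp add: Suc ennsum_cmult)
  also have "\<dots> = (\<Sum>\<^sub>\<infinity>z. \<Sum>\<^sub>\<infinity>w. p x w * (P n w z * P m z y))"
    by (rule ennsum_swap)
  also have "\<dots> = (\<Sum>\<^sub>\<infinity>z. (\<Sum>\<^sub>\<infinity>w. p x w * P n w z) * P m z y)"
    by (simp only: ennsum_cmult_right[symmetric] mult.assoc)
  also have "\<dots> = (\<Sum>\<^sub>\<infinity>z. P (Suc n) x z * P m z y)" by (simp add: P_Suc)
  finally show ?case .
qed

lemma P_1: "P 1 x y = p x y"
proof -
  have "P 1 x y = (\<Sum>\<^sub>\<infinity>z. if z = y then p x z else 0)"
    by (simp only: One_nat_def P_Suc) (rule infsum_cong, auto)
  then show ?thesis by (simp add: ennsum_delta)
qed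

lemma P_Suc': "P (Suc n) x y = (\<Sum>\<^sub>\<infinity>z. P n x z * p z y)"
  using CK[of n 1 x y] P_1 by simp

lemma P_row: "(\<Sum>\<^sub>\<infinity>y. P n x y) \<le> 1"
proof (induction n arbitrary: x)
  case 0
  have "(\<Sum>\<^sub>\<infinity>y. P 0 x y) = (\<Sum>\<^sub>\<infinity>y. if y = x then 1 else 0)"
    by (rule infsum_cong) auto
  then show ?case by (simp add: ennsum_delta)
next
  case (Suc n)
  have "(\<Sum>\<^sub>\<infinity>y. P (Suc n) x y) = (\<Sum>\<^sub>\<infinity>y. \<Sum>\<^sub>\<infinity>z. p x z * P n z y)"
    by (simp add: P_Suc)
  also have "\<dots> = (\<Sum>\<^sub>\<infinity>z. \<Sum>\<^sub>\<infinity>y. p x z * P n z y)" by (rule ennsum_swap)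
  also have "\<dots> = (\<Sum>\<^sub>\<infinity>z. p x z * (\<Sum>\<^sub>\<infinity>y. P n z y))" by (simp add: ennsum_cmult)
  also have "\<dots> \<le> (\<Sum>\<^sub>\<infinity>z. p x z)"
    by (rule ennsum_mono) (use Suc in \<open>auto intro: mult_left_le\<close>)
  also have "\<dots> \<le> 1" by (rule pt_sum)
  finally show ?case .
qed

abbreviation W where "W x \<equiv> ennreal (vweight E mu x)"
abbreviation M where "M x y \<equiv> ennreal (mu x y)"

lemma reversible: "W x * P n x y = W y * P n y x"
proof (induction n arbitrary: x y)
  case 0 then show ?case by simp
next
  case (Suc n)
  have "W x * P (Suc n) x y = (\<Sum>\<^sub>\<infinity>z. W x * p x z * P n z y)"
    by (simp add: P_Suc ennsum_cmult mult.assoc)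
  also have "\<dots> = (\<Sum>\<^sub>\<infinity>z. M x z * P n z y)" by (simp add: W_pt)
  finally have 1: "W x * P (Suc n) x y = (\<Sum>\<^sub>\<infinity>z. M x z * P n z y)" .
  have "W y * P (Suc n) y x = (\<Sum>\<^sub>\<infinity>z. (W y * P n y z) * p z x)"
    by (simp add: P_Suc' ennsum_cmult mult.assoc)
  also have "\<dots> = (\<Sum>\<^sub>\<infinity>z. (W z * P n z y) * p z x)" by (simp add: Suc)
  also have "\<dots> = (\<Sum>\<^sub>\<infinity>z. M x z * P n z y)"
    by (rule infsum_cong) (metis (no_types, lifting) W_pt mu_sym mult.commute mult.left_commute)
  finally show ?case using 1 by simp
qed

end


context walk begin

abbreviation Q where "Q B n x y \<equiv> ennreal (qk E mu B n x y)"

declare qk.simps(2)[simp del]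

lemma qk_step:
  assumes "\<And>z. 0 \<le> qk E mu B n x z \<and> qk E mu B n x z \<le> pn E mu n x z"
  shows "Q B (Suc n) x y = (if y \<in> B then (\<Sum>\<^sub>\<infinity>z. Q B n x z * p z y) else 0)"
    and "(\<Sum>\<^sub>\<infinity>z. Q B n x z * p z y) \<le> P (Suc n) x y"
proof -
  have le: "(\<Sum>\<^sub>\<infinity>z. Q B n x z * p z y) \<le> P (Suc n) x y"
  proof -
    have "(\<Sum>\<^sub>\<infinity>z. Q B n x z * p z y) \<le> (\<Sum>\<^sub>\<infinity>z. P n x z * p z y)"
    proof (rule ennsum_mono)
      fix z have "qk E mu B n x z \<le> pn E mu n x z" using assms by blast
      then show "Q B n x z * p z y \<le> P n x z * p z y" by (intro mult_right_mono ennreal_leI) auto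
    qed
    also have "\<dots> = P (Suc n) x y" by (simp add: P_Suc')
    finally show ?thesis .
  qed
  have eq: "(\<Sum>\<^sub>\<infinity>z. Q B n x z * p z y) = (\<Sum>\<^sub>\<infinity>z. ennreal (qk E mu B n x z * ptrans E mu z y))"
    using assms pt_nonneg by (simp add: ennreal_mult')
  have lt: "(\<Sum>\<^sub>\<infinity>z. ennreal (qk E mu B n x z * ptrans E mu z y)) < top"
    using le eq P_le1[of "Suc n" x y] order.strict_trans1[OF _ ennreal_one_less_top] by (metis order.trans)
  show "Q B (Suc n) x y = (if y \<in> B then (\<Sum>\<^sub>\<infinity>z. Q B n x z * p z y) else 0)"
  proof (cases "y \<in> B")
    case True
    have "Q B (Suc n) x y = (\<Sum>\<^sub>\<infinity>z. ennreal (qk E mu B n x z * ptrans E mu z y))"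
      unfolding qk.simps(2) using True by simp (rule ennsum_real_fin, use assms pt_nonneg lt in auto)
    then show ?thesis using True eq by simp
  next
    case False then show ?thesis by (simp add: qk.simps(2))
  qed
  show "(\<Sum>\<^sub>\<infinity>z. Q B n x z * p z y) \<le> P (Suc n) x y" by (rule le)
qed

lemma qk_bounds: "0 \<le> qk E mu B n x y \<and> qk E mu B n x y \<le> pn E mu n x y"
proof (induction n arbitrary: y)
  case 0 then show ?case by simp
next
  case (Suc n)
  have a: "Q B (Suc n) x y \<le> P (Suc n) x y"
    using qk_step[of B n x y, OF Suc] by simp
  have b: "qk E mu B (Suc n) x y \<ge> 0"
    unfolding qk.simps(2) by (auto intro!: infsum_nonneg mult_nonneg_nonneg pt_nonneg simp: Suc)
  show ?case using a b pn_01[of "Suc n" x y] by (simp add: ennreal_le_iff)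
qed

lemma Q_Suc: "Q B (Suc n) x y = (if y \<in> B then (\<Sum>\<^sub>\<infinity>z. Q B n x z * p z y) else 0)"
  using qk_step(1)[OF qk_bounds] .

lemma Q_le_P: "Q B n x y \<le> P n x y"
  using qk_bounds by (auto intro: ennreal_leI)

lemma Q_out: "y \<notin> B \<Longrightarrow> Q B n x y = 0"
  by (cases n) (auto simp: Q_Suc)

lemma Q_mono: "B \<subseteq> B' \<Longrightarrow> Q B n x y \<le> Q B' n x y"
proof (induction n arbitrary: y)
  case 0 then show ?case by auto
next
  case (Suc n)
  show ?case
  proof (cases "y \<in> B")
    case True
    then have "y \<in> B'" using Suc by auto
    have "(\<Sum>\<^sub>\<infinity>z. Q B n x z * p z y) \<le> (\<Sum>\<^sub>\<infinity>z. Q B' n x z * p z y)"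
      by (rule ennsum_mono) (use Suc in \<open>auto intro: mult_right_mono\<close>)
    then show ?thesis using True \<open>y \<in> B'\<close> by (simp add: Q_Suc)
  next
    case False then show ?thesis by (simp add: Q_Suc)
  qed
qed

lemma Q_markov: "Q B (n + m) x y = (\<Sum>\<^sub>\<infinity>z. Q B n x z * Q B m z y)"
proof (induction m arbitrary: y)
  case 0
  have "(\<Sum>\<^sub>\<infinity>z. Q B n x z * Q B 0 z y) = (\<Sum>\<^sub>\<infinity>z. if z = y then (if y \<in> B then Q B n x z else 0) else 0)"
    by (rule infsum_cong) auto
  then show ?case by (simp add: ennsum_delta Q_out)
next
  case (Suc m)
  show ?case
  proof (cases "y \<in> B")
    case True
    have "Q B (n + Suc m) x y = (\<Sum>\<^sub>\<infinity>w. Q B (n + m) x w * p w y)"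
      using True by (simp add: Q_Suc)
    also have "\<dots> = (\<Sum>\<^sub>\<infinity>w. \<Sum>\<^sub>\<infinity>z. Q B n x z * (Q B m z w * p w y))"
      by (simp only: Suc ennsum_cmult_right[symmetric] mult.assoc)
    also have "\<dots> = (\<Sum>\<^sub>\<infinity>z. \<Sum>\<^sub>\<infinity>w. Q B n x z * (Q B m z w * p w y))"
      by (rule ennsum_swap)
    also have "\<dots> = (\<Sum>\<^sub>\<infinity>z. Q B n x z * Q B (Suc m) z y)"
      using True by (simp add: Q_Suc ennsum_cmult)
    finally show ?thesis .
  next
    case False then show ?thesis by (simp add: Q_out)
  qed
qed

definition surv where "surv B k x = (\<Sum>\<^sub>\<infinity>y. Q B k x y)"
definition T where "T B x = (\<Sum>\<^sub>\<infinity>k. surv B k x)"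

lemma surv_le1: "surv B k x \<le> 1"
proof -
  have "surv B k x \<le> (\<Sum>\<^sub>\<infinity>y. P k x y)" unfolding surv_def by (rule ennsum_mono) (rule Q_le_P)
  then show ?thesis using P_row[of k x] by (rule order.trans)
qed

lemma surv_shift: "surv B (n + m) x = (\<Sum>\<^sub>\<infinity>z. Q B n x z * surv B m z)"
proof -
  have "surv B (n + m) x = (\<Sum>\<^sub>\<infinity>y. \<Sum>\<^sub>\<infinity>z. Q B n x z * Q B m z y)"
    by (simp add: surv_def Q_markov)
  also have "\<dots> = (\<Sum>\<^sub>\<infinity>z. \<Sum>\<^sub>\<infinity>y. Q B n x z * Q B m z y)" by (rule ennsum_swap)
  also have "\<dots> = (\<Sum>\<^sub>\<infinity>z. Q B n x z * surv B m z)" by (simp add: surv_def ennsum_cmult)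
  finally show ?thesis .
qed

lemma tail: "(\<Sum>\<^sub>\<infinity>m. surv B (n + m) x) = (\<Sum>\<^sub>\<infinity>z. Q B n x z * T B z)"
proof -
  have "(\<Sum>\<^sub>\<infinity>m. surv B (n + m) x) = (\<Sum>\<^sub>\<infinity>m. \<Sum>\<^sub>\<infinity>z. Q B n x z * surv B m z)"
    by (simp add: surv_shift)
  also have "\<dots> = (\<Sum>\<^sub>\<infinity>z. \<Sum>\<^sub>\<infinity>m. Q B n x z * surv B m z)" by (rule ennsum_swap)
  also have "\<dots> = (\<Sum>\<^sub>\<infinity>z. Q B n x z * T B z)" by (simp add: T_def ennsum_cmult)
  finally show ?thesis .
qed

lemma T_split:
  assumes "\<And>z. z \<in> B \<Longrightarrow> T B z \<le> S"
  shows "T B x \<le> of_nat n + surv B n x * S"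
proof -
  have U: "(UNIV::nat set) = {..<n} \<union> {n..}" by auto
  have "T B x = (\<Sum>\<^sub>\<infinity>k\<in>{..<n}. surv B k x) + (\<Sum>\<^sub>\<infinity>k\<in>{n..}. surv B k x)"
    unfolding T_def by (subst U, rule infsum_Un_disjoint) auto
  also have "(\<Sum>\<^sub>\<infinity>k\<in>{n..}. surv B k x) = (\<Sum>\<^sub>\<infinity>m. surv B (n + m) x)"
  proof -
    have "{n..} = (\<lambda>m. n + m) ` UNIV"
      by (auto simp: image_iff) (metis le_add_diff_inverse)
    then show ?thesis using infsum_reindex[of "(+) n" UNIV "\<lambda>k. surv B k x"] by (simp add: o_def)
  qed
  also have "\<dots> = (\<Sum>\<^sub>\<infinity>z. Q B n x z * T B z)" by (rule tail)
  also have "\<dots> \<le> (\<Sum>\<^sub>\<infinity>z. Q B n x z * S)"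
  proof (rule ennsum_mono)
    fix z show "Q B n x z * T B z \<le> Q B n x z * S"
      by (cases "z \<in> B") (auto simp: Q_out assms intro: mult_left_mono)
  qed
  also have "\<dots> = surv B n x * S" by (simp add: surv_def ennsum_cmult_right)
  also have "(\<Sum>\<^sub>\<infinity>k\<in>{..<n}. surv B k x) \<le> of_nat n"
  proof -
    have "(\<Sum>\<^sub>\<infinity>k\<in>{..<n}. surv B k x) = (\<Sum>k<n. surv B k x)" by simp
    also have "\<dots> \<le> of_nat (card {..<n}) * 1" by (rule sum_bounded_above) (rule surv_le1)
    finally show ?thesis by simp
  qed
  finally show ?thesis by (simp add: add_right_mono)
qed

lemma exit_eq: "exit_time E mu d x r = T (dball d x r) x"
proof -
  have "ennreal (\<Sum>\<^sub>\<infinity>y. qk E mu (dball d x r) k x y) = surv (dball d x r) k x" for k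
    unfolding surv_def
    by (rule ennsum_real_fin) (use qk_bounds surv_le1[unfolded surv_def] order.strict_trans1[OF _ ennreal_one_less_top] in auto)
  then show ?thesis unfolding exit_time_def T_def by (simp add: suminf_ennsum)
qed

end


context walk begin

lemma T_mono: "B \<subseteq> B' \<Longrightarrow> T B x \<le> T B' x"
  unfolding T_def surv_def by (intro ennsum_mono Q_mono)

lemma pn_rev: "vweight E mu x * pn E mu n x y = vweight E mu y * pn E mu n y x"
  using reversible[of x n y] vw_nonneg pn_01
  by (simp add: ennreal_mult'[symmetric] mult_nonneg_nonneg)

lemma CS_bound:
  assumes F: "finite F" and pos: "\<And>y. vweight E mu y > 0"
  shows "hn E mu (2 * n) x x \<ge> (\<Sum>y\<in>F. pn E mu n x y)\<^sup>2 / (\<Sum>y\<in>F. vweight E mu y)"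
proof -
  let ?v = "vweight E mu" and ?p = "pn E mu n"
  have "ennreal (\<Sum>y\<in>F. ?p x y * ?p y x) = (\<Sum>y\<in>F. P n x y * P n y x)"
    using pn_01 by (simp add: ennreal_mult' sum_ennreal[symmetric] mult_nonneg_nonneg)
  also have "\<dots> = (\<Sum>\<^sub>\<infinity>y\<in>F. P n x y * P n y x)" using F by simp
  also have "\<dots> \<le> (\<Sum>\<^sub>\<infinity>y. P n x y * P n y x)" by (rule ennsum_subset) simp
  also have "\<dots> = P (n + n) x x" by (simp add: CK)
  finally have "(\<Sum>y\<in>F. ?p x y * ?p y x) \<le> pn E mu (2 * n) x x"
    using pn_01 by (simp add: ennreal_le_iff mult_2)
  moreover have "?p y x = ?v x * ?p x y / ?v y" for y
    using pn_rev[of x n y] pos[of y] by (simp add: field_simps)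
  ultimately have 1: "(\<Sum>y\<in>F. ?v x * (?p x y)\<^sup>2 / ?v y) \<le> pn E mu (2 * n) x x"
    by (simp add: power2_eq_square mult_ac)
  have 2: "(\<Sum>y\<in>F. ?v x * (?p x y)\<^sup>2 / ?v y) = ?v x * (\<Sum>y\<in>F. (?p x y)\<^sup>2 / ?v y)"
    by (simp add: sum_distrib_left)
  have 3: "(\<Sum>y\<in>F. (?p x y)\<^sup>2 / ?v y) \<le> pn E mu (2 * n) x x / ?v x"
    using 1 2 pos[of x] by (simp add: field_simps)
  have "(\<Sum>y\<in>F. ?p x y)\<^sup>2 = (\<Sum>y\<in>F. (?p x y / sqrt (?v y)) * sqrt (?v y))\<^sup>2"
    using pos by (intro arg_cong[where f="\<lambda>t. t\<^sup>2"] sum.cong) (auto simp: less_le)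
  also have "\<dots> \<le> (\<Sum>y\<in>F. (?p x y / sqrt (?v y))\<^sup>2) * (\<Sum>y\<in>F. (sqrt (?v y))\<^sup>2)"
    by (rule Cauchy_Schwarz_ineq_sum)
  also have "\<dots> = (\<Sum>y\<in>F. (?p x y)\<^sup>2 / ?v y) * (\<Sum>y\<in>F. ?v y)"
    using pos by (simp add: power_divide less_imp_le)
  finally have 4: "(\<Sum>y\<in>F. ?p x y)\<^sup>2 \<le> (\<Sum>y\<in>F. (?p x y)\<^sup>2 / ?v y) * (\<Sum>y\<in>F. ?v y)" .
  show ?thesis
  proof (cases "F = {}")
    case True then show ?thesis using pn_01 vw_nonneg by (simp add: hn_def)
  next
    case False
    then have "(\<Sum>y\<in>F. ?v y) > 0" using F pos by (intro sum_pos) auto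
    then have "(\<Sum>y\<in>F. ?p x y)\<^sup>2 / (\<Sum>y\<in>F. ?v y) \<le> (\<Sum>y\<in>F. (?p x y)\<^sup>2 / ?v y)"
      using 4 by (simp add: divide_le_eq)
    then show ?thesis using 3 by (simp add: hn_def)
  qed
qed

lemma vw_all_pos:
  assumes conn: "connected_graph E" and Ppos: "P (Suc m) x y > 0"
  shows "vweight E mu w > 0"
proof -
  have "vweight E mu x \<noteq> 0"
  proof
    assume "vweight E mu x = 0"
    then have "p x z = 0" for z by (simp add: ptrans_def)
    then have "P (Suc m) x y = 0" by (simp add: P_Suc)
    then show False using Ppos by simp
  qed
  then obtain z where "E x z"
    by (metis (no_types, lifting) Collect_empty_eq infsum_empty vweight_def)
  then have xz: "x \<noteq> z" using sg by (auto simp: simple_graph_def)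
  show ?thesis
  proof (cases "w = x")
    case True then show ?thesis using \<open>E x z\<close> vw_pos by simp
  next
    case False
    have "E\<^sup>*\<^sup>* w x" using conn by (simp add: connected_graph_def)
    then obtain v where "E w v" using False by (metis converse_rtranclpE)
    then show ?thesis by (rule vw_pos)
  qed
qed

end


context walk begin

lemma surv_lower:
  assumes met: "is_metric d" and r0: "r0 > 0" and c1: "c1 > 0" and c2: "c2 > 0" and b: "\<beta> > 0"
    and H: "\<forall>x. \<forall>r>r0. ennreal (c1 * r powr \<beta>) \<le> exit_time E mu d x r \<and>
                 exit_time E mu d x r \<le> ennreal (c2 * r powr \<beta>)"
    and R: "R > r0" and nR: "2 * real n \<le> c1 * R powr \<beta>"
  shows "ennreal (c1 / (2 * c2 * 2 powr \<beta>)) \<le> surv (dball d x R) n x"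
proof -
  define B where "B = dball d x R"
  define S where "S = c2 * (2 * R) powr \<beta>"
  have Rpos: "R > 0" using R r0 by simp
  have TB: "T B z \<le> ennreal S" if z: "z \<in> B" for z
  proof -
    have "B \<subseteq> dball d z (2 * R)"
    proof
      fix w assume "w \<in> B"
      then have "d x w < R" by (simp add: B_def dball_def)
      moreover have "d x z < R" using z by (simp add: B_def dball_def)
      moreover have "d z w \<le> d z x + d x w" using met unfolding is_metric_def by blast
      moreover have "d z x = d x z" using met unfolding is_metric_def by blast
      ultimately show "w \<in> dball d z (2 * R)" by (simp add: dball_def)
    qed
    then have "T B z \<le> T (dball d z (2 * R)) z" by (rule T_mono)
    also have "\<dots> = exit_time E mu d z (2 * R)" by (simp add: exit_eq)
    also have "\<dots> \<le> ennreal S" using H R r0 by (simp add: S_def)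
    finally show ?thesis .
  qed
  have "ennreal (c1 * R powr \<beta>) \<le> exit_time E mu d x R" using H R by simp
  also have "\<dots> = T B x" by (simp add: exit_eq B_def)
  also have "\<dots> \<le> of_nat n + surv B n x * ennreal S" by (rule T_split) (rule TB)
  finally have 1: "ennreal (c1 * R powr \<beta>) \<le> of_nat n + surv B n x * ennreal S" .
  have "surv B n x < top" using surv_le1[of B n x] order.strict_trans1[OF _ ennreal_one_less_top] by blast
  then obtain s where s: "surv B n x = ennreal s" "s \<ge> 0"
    by (metis ennreal_enn2real enn2real_nonneg less_top)
  have Spos: "S \<ge> 0" using c2 by (simp add: S_def)
  have "ennreal (c1 * R powr \<beta>) \<le> ennreal (real n) + ennreal (s * S)"
    using 1 s Spos by (simp add: ennreal_mult' ennreal_of_nat_eq_real_of_nat)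
  also have "ennreal (real n) + ennreal (s * S) = ennreal (real n + s * S)"
    by (rule ennreal_plus[symmetric]) (use s Spos in auto)
  finally have 2: "c1 * R powr \<beta> \<le> real n + s * S"
    using s Spos by (subst (asm) ennreal_le_iff) auto
  define A where "A = R powr \<beta>"
  have Apos: "A > 0" using Rpos by (simp add: A_def)
  have SA: "S = c2 * 2 powr \<beta> * A" using Rpos by (simp add: S_def A_def powr_mult)
  have "(c1 / 2) * A \<le> (s * (c2 * 2 powr \<beta>)) * A" using 2 nR by (simp add: SA A_def mult_ac)
  then have "c1 / 2 \<le> s * (c2 * 2 powr \<beta>)" using Apos by (rule mult_right_le_imp_le)
  then have "c1 / (2 * c2 * 2 powr \<beta>) \<le> s" using c2 by (simp add: field_simps)
  then show ?thesis using s by (simp add: B_def)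
qed

end


theorem proposition6p3:
  fixes E :: "'a \<Rightarrow> 'a \<Rightarrow> bool" and mu d :: "'a \<Rightarrow> 'a \<Rightarrow> real" and \<alpha> \<beta> :: real
  assumes "countable (UNIV :: 'a set)"
    and "simple_graph E" and "connected_graph E"
    and "conductance E mu" and "is_metric d"
    and "\<beta> > 0"
    and finvol: "\<And>x r. vweight E mu summable_on dball d x r"
    and Ebeta: "\<exists>r0>0. \<exists>c1>0. \<exists>c2>0. \<forall>x. \<forall>r>r0.
                 ennreal (c1 * r powr \<beta>) \<le> exit_time E mu d x r \<and>
                 exit_time E mu d x r \<le> ennreal (c2 * r powr \<beta>)"
    and VG: "\<exists>C. \<forall>x. \<forall>r s. 0 < s \<and> s < r \<longrightarrow>
                 vol E mu d x r \<le> C * (r / s) powr \<alpha> * vol E mu d x s"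
  shows "\<exists>c>0. \<forall>x. \<forall>n::nat. n \<ge> 1 \<longrightarrow>
           hn E mu (2 * n) x x \<ge> c / vol E mu d x (real n powr (1 / \<beta>))"
proof -
  interpret walk E mu using assms(2,4) by unfold_locales
  obtain r0 c1 c2 where r0: "r0 > 0" and c1: "c1 > 0" and c2: "c2 > 0"
    and H: "\<forall>x. \<forall>r>r0. ennreal (c1 * r powr \<beta>) \<le> exit_time E mu d x r \<and>
                 exit_time E mu d x r \<le> ennreal (c2 * r powr \<beta>)"
    using Ebeta by blast
  obtain C where C: "\<And>x r s. 0 < s \<Longrightarrow> s < r \<Longrightarrow> vol E mu d x r \<le> C * (r / s) powr \<alpha> * vol E mu d x s"
    using VG by blast
  have b: "\<beta> > 0" by fact
  define \<epsilon> where "\<epsilon> = c1 / (2 * c2 * 2 powr \<beta>)"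
  have \<epsilon>pos: "\<epsilon> > 0" using c1 c2 by (simp add: \<epsilon>_def)
  define a where "a = (2 / c1) powr (1 / \<beta>)"
  have apos: "a > 0" using c1 by (simp add: a_def)
  define sc where "sc n = real n powr (1 / \<beta>)" for n :: nat
  define R where "R n = max (r0 + 1) (a * sc n)" for n :: nat
  define Mx where "Mx = max (r0 + 1) a"
  define K where "K = max 1 (\<bar>C\<bar> * Mx powr \<bar>\<alpha>\<bar>)"
  have Kpos: "K > 0" by (simp add: K_def)
  have sc1: "sc n \<ge> 1" if "n \<ge> 1" for n
    unfolding sc_def using that b by (intro ge_one_powr_ge_zero) auto
  have Rr0: "R n > r0" for n by (simp add: R_def)
  have Rn: "2 * real n \<le> c1 * R n powr \<beta>" if "n \<ge> 1" for n
  proof -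
    have "a * sc n = (2 * real n / c1) powr (1 / \<beta>)"
      using c1 by (simp add: a_def sc_def powr_mult[symmetric])
    then have "((a * sc n) powr \<beta>) = 2 * real n / c1"
      using c1 b by (simp add: powr_powr)
    moreover have "(a * sc n) powr \<beta> \<le> R n powr \<beta>"
      using apos sc1[OF that] b by (intro powr_mono2) (auto simp: R_def)
    ultimately have "c1 * (2 * real n / c1) \<le> c1 * R n powr \<beta>"
      using c1 by (metis mult_left_mono less_imp_le)
    then show ?thesis using c1 by simp
  qed
  have surv_lb: "ennreal \<epsilon> \<le> surv (dball d x (R n)) n x" if "n \<ge> 1" for x n
    unfolding \<epsilon>_def by (rule surv_lower[OF assms(5) r0 c1 c2 b H Rr0 Rn[OF that]])
  have allpos: "vweight E mu w > 0" for w
  proof -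
    obtain x0 :: 'a where True by blast
    have e0: "0 < ennreal \<epsilon>" using \<epsilon>pos by simp
    have sp: "surv (dball d x0 (R (Suc 0))) (Suc 0) x0 > 0"
      using less_le_trans[OF e0 surv_lb[of "Suc 0" x0]] by simp
    have "\<exists>y. Q (dball d x0 (R (Suc 0))) (Suc 0) x0 y \<noteq> 0"
    proof (rule ccontr)
      assume "\<not> ?thesis"
      then have "surv (dball d x0 (R (Suc 0))) (Suc 0) x0 = 0" unfolding surv_def by simp
      then show False using sp by simp
    qed
    then obtain y where "Q (dball d x0 (R (Suc 0))) (Suc 0) x0 y \<noteq> 0" by blast
    then have "0 < Q (dball d x0 (R (Suc 0))) (Suc 0) x0 y" using zero_less_iff_neq_zero by blast
    then have "P (Suc 0) x0 y > 0" using Q_le_P[of "dball d x0 (R (Suc 0))" "Suc 0" x0 y]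
      by (rule less_le_trans)
    then show ?thesis by (rule vw_all_pos[OF assms(3)])
  qed
  show ?thesis
  proof (intro exI[of _ "(\<epsilon> / 2)\<^sup>2 / K"] conjI allI impI)
    show "(\<epsilon> / 2)\<^sup>2 / K > 0" using \<epsilon>pos Kpos by simp
    fix x and n :: nat assume n: "n \<ge> 1"
    define B where "B = dball d x (R n)"
    have "ennreal \<epsilon> \<le> surv B n x" using surv_lb[OF n] by (simp add: B_def)
    also have "surv B n x = (\<Sum>\<^sub>\<infinity>y\<in>B. Q B n x y)"
      unfolding surv_def by (rule infsum_cong_neutral) (auto simp: Q_out)
    also have "\<dots> \<le> (\<Sum>\<^sub>\<infinity>y\<in>B. P n x y)" by (intro ennsum_mono Q_le_P)
    also have "\<dots> = (SUP F\<in>{F. finite F \<and> F \<subseteq> B}. sum (\<lambda>y. P n x y) F)"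
      by (rule nonneg_infsum_complete) simp
    finally have le: "ennreal \<epsilon> \<le> (SUP F\<in>{F. finite F \<and> F \<subseteq> B}. sum (\<lambda>y. P n x y) F)" .
    have "ennreal (\<epsilon> / 2) < ennreal \<epsilon>" using \<epsilon>pos by (intro ennreal_lessI) auto
    then have "ennreal (\<epsilon> / 2) < (SUP F\<in>{F. finite F \<and> F \<subseteq> B}. sum (\<lambda>y. P n x y) F)"
      using le by (rule less_le_trans)
    then obtain F where F: "finite F" "F \<subseteq> B" and "ennreal (\<epsilon> / 2) < sum (\<lambda>y. P n x y) F"
      by (auto simp: less_SUP_iff)
    then have "ennreal (\<epsilon> / 2) < ennreal (\<Sum>y\<in>F. pn E mu n x y)"
      using pn_01 by (simp add: sum_ennreal)
    then have Fsum: "\<epsilon> / 2 < (\<Sum>y\<in>F. pn E mu n x y)"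
      by (meson ennreal_leI not_le)
    then have Fne: "F \<noteq> {}" using \<epsilon>pos by auto
    have vFpos: "(\<Sum>y\<in>F. vweight E mu y) > 0" using F Fne allpos by (intro sum_pos) auto
    have vF: "(\<Sum>y\<in>F. vweight E mu y) \<le> vol E mu d x (R n)"
    proof -
      have "(\<Sum>y\<in>F. vweight E mu y) = infsum (vweight E mu) F" using F by simp
      also have "\<dots> \<le> infsum (vweight E mu) B"
        by (rule infsum_mono2) (use F finvol vw_nonneg in \<open>auto simp: B_def\<close>)
      finally show ?thesis by (simp add: vol_def B_def)
    qed
    have volnn: "vol E mu d x r \<ge> 0" for r
      unfolding vol_def by (rule infsum_nonneg) (rule vw_nonneg)
    have volmono: "vol E mu d x r \<le> vol E mu d x r'" if "r \<le> r'" for r r'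
      unfolding vol_def by (rule infsum_mono2) (use finvol vw_nonneg that in \<open>auto simp: dball_def\<close>)
    have sc1n: "sc n \<ge> 1" by (rule sc1[OF n])
    have volK: "vol E mu d x (R n) \<le> K * vol E mu d x (sc n)"
    proof (cases "R n \<le> sc n")
      case True
      then have "vol E mu d x (R n) \<le> vol E mu d x (sc n)" by (rule volmono)
      also have "\<dots> \<le> K * vol E mu d x (sc n)"
        using volnn[of "sc n"] mult_right_mono[of 1 K "vol E mu d x (sc n)"] by (simp add: K_def)
      finally show ?thesis .
    next
      case False
      let ?q = "R n / sc n"
      have q1: "?q \<ge> 1" using False sc1n by simp
      have qM: "?q \<le> Mx"
      proof -
        have "(r0 + 1) / sc n \<le> r0 + 1" using sc1n r0 by (simp add: divide_le_eq)
        moreover have "a * sc n / sc n = a" using sc1n by simp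
        ultimately show ?thesis
          by (cases "r0 + 1 \<le> a * sc n") (auto simp: R_def Mx_def max_def)
      qed
      have "vol E mu d x (R n) \<le> C * ?q powr \<alpha> * vol E mu d x (sc n)"
        using C[of "sc n" "R n" x] False sc1n by simp
      also have "\<dots> \<le> \<bar>C\<bar> * ?q powr \<alpha> * vol E mu d x (sc n)"
        using volnn[of "sc n"] by (intro mult_right_mono) auto
      also have "?q powr \<alpha> \<le> Mx powr \<bar>\<alpha>\<bar>"
      proof -
        have "?q powr \<alpha> \<le> ?q powr \<bar>\<alpha>\<bar>" using q1 by (intro powr_mono) auto
        also have "\<dots> \<le> Mx powr \<bar>\<alpha>\<bar>" using q1 qM by (intro powr_mono2) auto
        finally show ?thesis .
      qed
      then have "\<bar>C\<bar> * ?q powr \<alpha> * vol E mu d x (sc n) \<le> \<bar>C\<bar> * Mx powr \<bar>\<alpha>\<bar> * vol E mu d x (sc n)"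
        using volnn[of "sc n"] by (intro mult_right_mono mult_left_mono) auto
      also have "\<dots> \<le> K * vol E mu d x (sc n)"
        using volnn[of "sc n"] by (intro mult_right_mono) (auto simp: K_def)
      finally show ?thesis by simp
    qed
    have "(\<epsilon> / 2)\<^sup>2 / K / vol E mu d x (sc n) = (\<epsilon> / 2)\<^sup>2 / (K * vol E mu d x (sc n))"
      by simp
    also have "\<dots> \<le> (\<epsilon> / 2)\<^sup>2 / vol E mu d x (R n)"
      using vF vFpos volK by (intro divide_left_mono) auto
    also have "\<dots> \<le> (\<epsilon> / 2)\<^sup>2 / (\<Sum>y\<in>F. vweight E mu y)"
      using vF vFpos by (intro divide_left_mono) auto
    also have "\<dots> \<le> (\<Sum>y\<in>F. pn E mu n x y)\<^sup>2 / (\<Sum>y\<in>F. vweight E mu y)"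
      using Fsum \<epsilon>pos vFpos by (intro divide_right_mono power_mono) auto
    also have "\<dots> \<le> hn E mu (2 * n) x x" by (rule CS_bound[OF F(1) allpos])
    finally show "(\<epsilon> / 2)\<^sup>2 / K / vol E mu d x (real n powr (1 / \<beta>)) \<le> hn E mu (2 * n) x x"
      by (simp add: sc_def)
  qed
qed

end
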